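(* Let $B$ be a triangulated closed oriented two-dimensional surface, with all triangles oriented consistently with $B$. (1) Consistent collections of framed small necklaces over the simplices of $B$ (equivalently, small framed semisimplicial triangulations of circle bundles over $B$) are in natural bijection with $Or(B)$, the set of orientations of the edges of $B$; the bijection sends a collection to the edge orientations induced by its framings. (2) If $a\in Or(B)$, viewed as a $1$-cochain with values $\pm1$, then the $2$-cochain $\mathcal{F}(da)$ represents the Euler class of the circle bundle determined by the collection of framed small necklaces corresponding to $a$.
   Context: Necklaces: given a semisimplicially triangulated circle bundle $\pi:E\to B$ and a $k$-simplex $\sigma$ of $B$, each $(k+1)$-simplex $\rho$ of $E$ over $\sigma$ has exactly one vertex of $\sigma$ whose preimage in $\rho$ is an edge; label $\rho$ by that vertex. The fibre over an interior point of $\sigma$ is a circle meeting these simplices in a cyclic order; the resulting cyclic word of labels (beads colored by vertices of $\sigma$) is the necklace $\mathcal{O}(\sigma)$. For a face $\tau\subset\sigma$, $\mathcal{O}(\tau)$ is obtained from $\mathcal{O}(\sigma)$ by deleting beads whose colors are not vertices of $\tau$, giving an injective order-preserving morphism $\mathcal{O}(\tau)\to\mathcal{O}(\sigma)$; these morphisms compose consistently. Conversely, a consistent collection of necklaces and morphisms over the simplices of $B$ determines a semisimplicially triangulated circle bundle over $B$. A small necklace has exactly two beads of each color and is invariant under rotation by half its length; it is framed if one bead of each color is marked bold, and a collection of framed necklaces is consistent if the morphisms send bold beads to bold beads. For an edge $ij$ the framed necklace has form $ijij$, and the edge is oriented $i\to j$ iff the bead immediately following the bold $i$ in the positive direction is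 the bold $j$. Elements of $Or(B)$ are identified with $1$-cochains $a$ taking values $\pm1$ ($a$ is $+1$ on an oriented edge iff the chosen orientation agrees with it). $d$ is the simplicial coboundary. $\mathcal{F}:\{\pm1,\pm3\}\to\{\pm1/4\}$ is defined by $\mathcal{F}(3)=\mathcal{F}(-1)=1/4$, $\mathcal{F}(-3)=\mathcal{F}(1)=-1/4$, applied valuewise. Sign convention for the Euler class: it is the class represented by the local-formula cocycle $\varepsilon$, where for an oriented triangle with vertices $0,1,2$ in the order of its orientation, $\varepsilon=\frac{\#(\mathrm{neg})-\#(\mathrm{pos})}{2\#(0)\#(1)\#(2)}$, a triple of distinctly colored beads being positive iff it reads $0,1,2$ in cyclic order along the positive direction. *)

theory Defs
  imports Complex_Main
begin

text \<open>A triangulated closed oriented surface B is given by its set T of positively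
oriented triangles, each written as an ordered triple (x,y,z) of distinct vertices in
the order of its orientation; T is closed under cyclic rotation of triples, so every
triangle of B occurs as its three cyclic rotations, and never with the opposite
orientation.  Closedness and consistency of the orientation: every oriented edge (x,y)
of a triangle lies in exactly one positively oriented triangle (x,y,_) and exactly one
(y,x,_), i.e. each edge lies in exactly two triangles inducing opposite orientations on
it.  Manifold condition: the link of every vertex is a single circle.\<close>

definition link_next :: "('v \<times> 'v \<times> 'v) set \<Rightarrow> 'v \<Rightarrow> 'v \<Rightarrow> 'v" where
  "link_next T v u = (THE w. (v, u, w) \<in> T)"

definition closed_oriented_surface :: "'v set \<Rightarrow> ('v \<times> 'v \<times> 'v) set \<Rightarrow> bool" where
  "closed_oriented_surface V T \<longleftrightarrow>
     finite T \<and>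
     V = {x. \<exists>y z. (x, y, z) \<in> T} \<and>
     (\<forall>x y z. (x, y, z) \<in> T \<longrightarrow>
        x \<noteq> y \<and> y \<noteq> z \<and> x \<noteq> z \<and> (y, z, x) \<in> T \<and> (x, z, y) \<notin> T) \<and>
     (\<forall>x y z. (x, y, z) \<in> T \<longrightarrow> (\<exists>!w. (x, y, w) \<in> T) \<and> (\<exists>!w. (y, x, w) \<in> T)) \<and>
     (\<forall>v \<in> V. \<forall>u w. (\<exists>z. (v, u, z) \<in> T) \<longrightarrow> (\<exists>z. (v, w, z) \<in> T) \<longrightarrow>
        (\<exists>n. (link_next T v ^^ n) u = w))"

definition simplices :: "('v \<times> 'v \<times> 'v) set \<Rightarrow> 'v set set" where
  "simplices T = (\<Union>(x, y, z) \<in> T. {{x}, {x, y}, {x, y, z}})"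

definition is_edge :: "('v \<times> 'v \<times> 'v) set \<Rightarrow> 'v \<Rightarrow> 'v \<Rightarrow> bool" where
  "is_edge T i j \<longleftrightarrow> i \<noteq> j \<and> (\<exists>z. (i, j, z) \<in> T \<or> (j, i, z) \<in> T)"

text \<open>A framed necklace is a cyclic word of beads; a bead is (colour, bold?).
A cyclic word is represented by a list, read in the positive direction, up to rotation.\<close>

definition rot_equiv :: "'a list \<Rightarrow> 'a list \<Rightarrow> bool" where
  "rot_equiv w w' \<longleftrightarrow> (\<exists>k. w' = rotate k w)"

definition framed_small_necklace :: "'v set \<Rightarrow> ('v \<times> bool) list \<Rightarrow> bool" where
  "framed_small_necklace \<sigma> w \<longleftrightarrow>
     length w = 2 * card \<sigma> \<and> fst ` set w \<subseteq> \<sigma> \<and>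
     (\<forall>c \<in> \<sigma>. length (filter (\<lambda>b. fst b = c) w) = 2 \<and>
               length (filter (\<lambda>b. b = (c, True)) w) = 1) \<and>
     (\<forall>k < card \<sigma>. fst (w ! (k + card \<sigma>)) = fst (w ! k))"

definition consistent_framed :: "('v \<times> 'v \<times> 'v) set \<Rightarrow> ('v set \<Rightarrow> ('v \<times> bool) list) \<Rightarrow> bool" where
  "consistent_framed T N \<longleftrightarrow>
     (\<forall>\<sigma> \<in> simplices T. framed_small_necklace \<sigma> (N \<sigma>)) \<and>
     (\<forall>\<sigma> \<in> simplices T. \<forall>\<tau>. \<tau> \<subseteq> \<sigma> \<and> \<tau> \<noteq> {} \<longrightarrow>
         rot_equiv (filter (\<lambda>b. fst b \<in> \<tau>) (N \<sigma>)) (N \<tau>))"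

definition bold_follows :: "('v \<times> bool) list \<Rightarrow> 'v \<Rightarrow> 'v \<Rightarrow> bool" where
  "bold_follows w i j \<longleftrightarrow>
     (\<exists>k < length w. w ! k = (i, True) \<and> w ! (Suc k mod length w) = (j, True))"

text \<open>Orientations of edges as 1-cochains with values +-1 (0 off the edges):
a i j = 1 iff the edge is oriented i -> j.\<close>
definition Or :: "('v \<times> 'v \<times> 'v) set \<Rightarrow> ('v \<Rightarrow> 'v \<Rightarrow> int) set" where
  "Or T = {a. \<forall>i j. (is_edge T i j \<longrightarrow> a i j \<in> {1, -1} \<and> a j i = - a i j) \<and>
                    (\<not> is_edge T i j \<longrightarrow> a i j = 0)}"

definition orient_of :: "('v \<times> 'v \<times> 'v) set \<Rightarrow> ('v set \<Rightarrow> ('v \<times> bool) list) \<Rightarrow> 'v \<Rightarrow> 'v \<Rightarrow> int" where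
  "orient_of T N i j =
     (if is_edge T i j then (if bold_follows (N {i, j}) i j then 1 else -1) else 0)"

definition Fmap :: "int \<Rightarrow> rat" where
  "Fmap n = (if n = 3 \<or> n = -1 then 1/4 else if n = -3 \<or> n = 1 then -1/4 else 0)"

definition euler_local :: "('v \<times> bool) list \<Rightarrow> 'v \<Rightarrow> 'v \<Rightarrow> 'v \<Rightarrow> rat" where
  "euler_local w x y z =
     (let n = length w; col = (\<lambda>p. fst (w ! p));
          trip = {(p, q, r). p < n \<and> q < n \<and> r < n \<and> col p = x \<and> col q = y \<and> col r = z};
          cyc = (\<lambda>(p::nat, q::nat, r::nat). (p < q \<and> q < r) \<or> (q < r \<and> r < p) \<or> (r < p \<and> p < q));
          npos = card {t \<in> trip. cyc t};
          nneg = card {t \<in> trip. \<not> cyc t};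
          cnt = (\<lambda>c. card {p. p < n \<and> col p = c})
      in (of_nat nneg - of_nat npos) / (2 * of_nat (cnt x * cnt y * cnt z)))"

end

theory Submission
  imports Defs
begin


definition W :: "'v \<Rightarrow> 'v \<Rightarrow> 'v \<Rightarrow> bool \<Rightarrow> bool \<Rightarrow> bool \<Rightarrow> ('v \<times> bool) list" where
  "W c0 c1 c2 b0 b1 b2 = [(c0,b0),(c1,b1),(c2,b2),(c0,\<not>b0),(c1,\<not>b1),(c2,\<not>b2)]"
definition E2 :: "'v \<Rightarrow> 'v \<Rightarrow> bool \<Rightarrow> bool \<Rightarrow> ('v \<times> bool) list" where
  "E2 i j b0 b1 = [(i,b0),(j,b1),(i,\<not>b0),(j,\<not>b1)]"
definition V1 :: "'v \<Rightarrow> bool \<Rightarrow> ('v \<times> bool) list" where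
  "V1 v b = [(v,b),(v,\<not>b)]"

lemma len2: "length w = 2 \<Longrightarrow> \<exists>a b. w = [a,b]"
  by (cases w; cases "tl w"; auto simp: numeral_eq_Suc)
lemma len4: "length w = 4 \<Longrightarrow> \<exists>a b c d. w = [a,b,c,d]"
  by (auto simp: numeral_eq_Suc length_Suc_conv)
lemma len6: "length w = 6 \<Longrightarrow> \<exists>a b c d e f. w = [a,b,c,d,e,f]"
  by (auto simp: numeral_eq_Suc length_Suc_conv)

lemma all1: "(\<forall>k<(1::nat). P k) = P 0" by auto
lemma all2: "(\<forall>k<(2::nat). P k) = (P 0 \<and> P 1)" by (simp add: All_less_Suc2 eval_nat_numeral)
lemma all3: "(\<forall>k<(3::nat). P k) = (P 0 \<and> P 1 \<and> P 2)" by (simp add: All_less_Suc2 eval_nat_numeral)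

lemma form1: assumes "framed_small_necklace {v} w" shows "\<exists>b. w = V1 v b"
proof -
  have "length w = 2" using assms by (simp add: framed_small_necklace_def)
  then obtain p q where w: "w = [p,q]" using len2 by blast
  obtain d0 e0 d1 e1 where "p = (d0,e0)" "q = (d1,e1)" by (metis surj_pair)
  with assms w show ?thesis
    by (cases e0; cases e1; auto simp: framed_small_necklace_def V1_def)
qed

lemma form2: assumes "framed_small_necklace {i,j} w" "i \<noteq> j"
  shows "\<exists>b0 b1. w = E2 i j b0 b1 \<or> w = E2 j i b0 b1"
proof -
  have c: "card {i,j} = 2" using assms by simp
  have "length w = 4" using assms c by (simp add: framed_small_necklace_def)
  then obtain p0 p1 p2 p3 where w: "w = [p0,p1,p2,p3]" using len4 by blast
  obtain d0 e0 d1 e1 d2 e2 d3 e3 where p: "p0 = (d0,e0)" "p1 = (d1,e1)" "p2 = (d2,e2)" "p3 = (d3,e3)" by (metis surj_pair)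
  have h: "d2 = d0" "d3 = d1" "d0 \<in> {i,j}" "d1 \<in> {i,j}"
    using assms(1) unfolding framed_small_necklace_def c all2 w p by auto
  have cnt: "\<forall>c\<in>{i,j}. length (filter (\<lambda>b. fst b = c) w) = 2 \<and> length (filter (\<lambda>b. b = (c, True)) w) = 1"
    using assms(1) unfolding framed_small_necklace_def by blast
  have ci: "length (filter (\<lambda>b. fst b = i) w) = 2" "length (filter (\<lambda>b. b = (i,True)) w) = 1"
    and cj: "length (filter (\<lambda>b. fst b = j) w) = 2" "length (filter (\<lambda>b. b = (j,True)) w) = 1"
    using cnt by auto
  have ij: "j \<noteq> i" using assms(2) by simp
  from h(3,4) have "(d0 = i \<and> d1 = j) \<or> (d0 = j \<and> d1 = i)"
  proof (elim insertE emptyE)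
    assume "d0 = i" "d1 = i" thus ?thesis using cj(1) unfolding w p h(1,2) using ij by simp
  next
    assume "d0 = j" "d1 = j" thus ?thesis using ci(1) unfolding w p h(1,2) using ij assms(2) by simp
  qed auto
  then show ?thesis
  proof
    assume d: "d0 = i \<and> d1 = j"
    have "e2 = (\<not> e0)" "e3 = (\<not> e1)" using ci(2) cj(2) unfolding w p h(1,2) using d ij assms(2)
      by (cases e0; cases e2; simp; cases e1; cases e3; simp)+
    thus ?thesis using d unfolding w p h(1,2) E2_def by auto
  next
    assume d: "d0 = j \<and> d1 = i"
    have "e2 = (\<not> e0)" "e3 = (\<not> e1)" using ci(2) cj(2) unfolding w p h(1,2) using d ij assms(2)
      by (cases e0; cases e2; simp; cases e1; cases e3; simp)+
    thus ?thesis using d unfolding w p h(1,2) E2_def by auto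
  qed
qed

definition perm3 :: "'v \<Rightarrow> 'v \<Rightarrow> 'v \<Rightarrow> 'v \<Rightarrow> 'v \<Rightarrow> 'v \<Rightarrow> bool" where
  "perm3 x y z c0 c1 c2 \<longleftrightarrow> (c0,c1,c2) \<in> {(x,y,z),(y,z,x),(z,x,y),(x,z,y),(z,y,x),(y,x,z)}"

lemma form3: assumes "framed_small_necklace {x,y,z} w" "x \<noteq> y" "x \<noteq> z" "y \<noteq> z"
  shows "\<exists>c0 c1 c2 b0 b1 b2. w = W c0 c1 c2 b0 b1 b2 \<and> perm3 x y z c0 c1 c2"
proof -
  have c: "card {x,y,z} = 3" using assms by simp
  have "length w = 6" using assms c by (simp add: framed_small_necklace_def)
  then obtain p0 p1 p2 p3 p4 p5 where w: "w = [p0,p1,p2,p3,p4,p5]" using len6 by blast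
  obtain d0 e0 d1 e1 d2 e2 d3 e3 d4 e4 d5 e5 where p: "p0 = (d0,e0)" "p1 = (d1,e1)" "p2 = (d2,e2)" "p3 = (d3,e3)"
     "p4 = (d4,e4)" "p5 = (d5,e5)" by (metis surj_pair)
  have h: "d3 = d0" "d4 = d1" "d5 = d2" "d0 \<in> {x,y,z}" "d1 \<in> {x,y,z}" "d2 \<in> {x,y,z}"
    using assms(1) unfolding framed_small_necklace_def c all3 w p by auto
  have cnt: "\<forall>c\<in>{x,y,z}. length (filter (\<lambda>b. fst b = c) w) = 2 \<and> length (filter (\<lambda>b. b = (c, True)) w) = 1"
    using assms(1) unfolding framed_small_necklace_def by blast
  have mem: "c \<in> {d0,d1,d2}" if "c \<in> {x,y,z}" for c
  proof (rule ccontr)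
    assume "c \<notin> {d0,d1,d2}"
    hence "length (filter (\<lambda>b. fst b = c) w) = 0" unfolding w p h(1,2,3) by auto
    thus False using cnt that by auto
  qed
  have pm: "perm3 x y z d0 d1 d2"
    using mem[of x] mem[of y] mem[of z] h(4,5,6) assms(2,3,4) unfolding perm3_def by auto
  have dd: "d0 \<noteq> d1" "d0 \<noteq> d2" "d1 \<noteq> d2" using pm assms(2,3,4) unfolding perm3_def by auto
  have b0: "length (filter (\<lambda>b. b = (d0, True)) w) = 1" "length (filter (\<lambda>b. b = (d1, True)) w) = 1"
     "length (filter (\<lambda>b. b = (d2, True)) w) = 1" using cnt h(4,5,6) by auto
  have "e3 = (\<not> e0)" using b0(1) dd unfolding w p h(1,2,3) by (cases e0; cases e3; simp)
  moreover have "e4 = (\<not> e1)" using b0(2) dd unfolding w p h(1,2,3) by (cases e1; cases e4; simp)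
  moreover have "e5 = (\<not> e2)" using b0(3) dd unfolding w p h(1,2,3) by (cases e2; cases e5; simp)
  ultimately show ?thesis using pm unfolding w p h(1,2,3) W_def by blast
qed



lemma rot_refl: "rot_equiv w w" unfolding rot_equiv_def by (rule exI[of _ 0]) simp
lemma rot_trans: "rot_equiv u v \<Longrightarrow> rot_equiv v w \<Longrightarrow> rot_equiv u w"
  unfolding rot_equiv_def by (metis rotate_rotate)
lemma rot_sym: assumes "rot_equiv u v" shows "rot_equiv v u"
proof -
  obtain k where v: "v = rotate k u" using assms rot_equiv_def by blast
  show ?thesis
  proof (cases "length u = 0")
    case True thus ?thesis using v unfolding rot_equiv_def by simp
  next
    case False
    let ?L = "length u"
    have "rotate (?L - k mod ?L) v = rotate (?L - k mod ?L + k) u" using v by (simp add: rotate_rotate)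
    also have "\<dots> = rotate ((?L - k mod ?L + k) mod ?L) u" by (metis rotate_conv_mod)
    also have "(?L - k mod ?L + k) mod ?L = 0"
    proof -
      have "k mod ?L < ?L" using False by simp
      hence "?L - k mod ?L + k = ?L + (k - k mod ?L)" by simp
      also have "k - k mod ?L = ?L * (k div ?L)" by (simp add: minus_mod_eq_mult_div)
      finally show ?thesis by simp
    qed
    finally have "rotate (?L - k mod ?L) v = u" by simp
    thus ?thesis unfolding rot_equiv_def by metis
  qed
qed

lemma rot_len: "rot_equiv u v \<Longrightarrow> length v = length u" unfolding rot_equiv_def by auto

lemma bf_rot1: assumes "bold_follows (rotate m w) i j" shows "bold_follows w i j"
proof -
  let ?L = "length w"
  obtain k where k: "k < ?L" "rotate m w ! k = (i,True)" "rotate m w ! (Suc k mod ?L) = (j,True)"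
    using assms unfolding bold_follows_def by auto
  have L: "?L > 0" using k(1) by linarith
  have a: "w ! ((m + k) mod ?L) = (i,True)" using k by (simp add: nth_rotate)
  have "rotate m w ! (Suc k mod ?L) = w ! ((m + Suc k mod ?L) mod ?L)" using L by (simp add: nth_rotate)
  also have "(m + Suc k mod ?L) mod ?L = Suc ((m + k) mod ?L) mod ?L" by (simp add: mod_simps)
  finally have b: "w ! (Suc ((m + k) mod ?L) mod ?L) = (j,True)" using k by simp
  show ?thesis unfolding bold_follows_def using a b L by (intro exI[of _ "(m+k) mod ?L"]) simp
qed

lemma bf_rot: "rot_equiv w w' \<Longrightarrow> bold_follows w' i j = bold_follows w i j"
  by (metis bf_rot1 rot_equiv_def rot_sym)

lemma filter_rotate1: "\<exists>k. filter P (rotate1 w) = rotate k (filter P w)"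
proof (cases w)
  case Nil thus ?thesis by (intro exI[of _ 0]) simp
next
  case (Cons a u)
  show ?thesis
  proof (cases "P a")
    case True thus ?thesis using Cons by (intro exI[of _ 1]) simp
  next
    case False thus ?thesis using Cons by (intro exI[of _ 0]) simp
  qed
qed

lemma filter_rotate: "\<exists>k'. filter P (rotate k w) = rotate k' (filter P w)"
proof (induction k)
  case 0 thus ?case by (intro exI[of _ 0]) simp
next
  case (Suc k)
  then obtain k' where k': "filter P (rotate k w) = rotate k' (filter P w)" by blast
  obtain k2 where "filter P (rotate1 (rotate k w)) = rotate k2 (filter P (rotate k w))" using filter_rotate1 by blast
  thus ?case using k' by (simp add: rotate_rotate) (metis rotate_rotate)
qed

lemma filter_rot: "rot_equiv w w' \<Longrightarrow> rot_equiv (filter P w) (filter P w')"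
  unfolding rot_equiv_def by (metis filter_rotate)

definition pd :: "('v \<times> bool) list \<Rightarrow> 'v \<Rightarrow> 'v \<Rightarrow> bool" where
  "pd w i j = bold_follows (filter (\<lambda>b. fst b \<in> {i,j}) w) i j"

lemma pd_rot: "rot_equiv w w' \<Longrightarrow> pd w' i j = pd w i j"
  unfolding pd_def by (metis bf_rot filter_rot)




lemma ex4: "(\<exists>k<(4::nat). P k) = (P 0 \<or> P 1 \<or> P 2 \<or> P 3)"
  by (simp add: Ex_less_Suc2 eval_nat_numeral)
lemma bf4: "bold_follows [a0,a1,a2,a3] i j \<longleftrightarrow>
  (a0 = (i,True) \<and> a1 = (j,True)) \<or> (a1 = (i,True) \<and> a2 = (j,True)) \<or>
  (a2 = (i,True) \<and> a3 = (j,True)) \<or> (a3 = (i,True) \<and> a0 = (j,True))"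
proof -
  have l: "length [a0,a1,a2,a3] = 4" by simp
  show ?thesis unfolding bold_follows_def l ex4 by simp
qed

lemma fsn_V1: "framed_small_necklace {v} (V1 v b)"
  unfolding framed_small_necklace_def V1_def by (cases b) auto

lemma fsn_E2: "i \<noteq> j \<Longrightarrow> framed_small_necklace {i,j} (E2 i j b0 b1)"
  unfolding framed_small_necklace_def E2_def by (cases b0; cases b1; simp add: all2 All_less_Suc2)

lemma fsn_W: "x \<noteq> y \<Longrightarrow> x \<noteq> z \<Longrightarrow> y \<noteq> z \<Longrightarrow> framed_small_necklace {x,y,z} (W x y z b0 b1 b2)"
  unfolding framed_small_necklace_def W_def by (cases b0; cases b1; cases b2; simp add: all3 All_less_Suc2)

lemma rotE: "w' = rotate k w \<Longrightarrow> rot_equiv w w'" unfolding rot_equiv_def by blast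

lemma R1: "rot_equiv (W c0 c1 c2 b0 b1 b2) (W c1 c2 c0 b1 b2 (\<not>b0))"
  by (rule rotE[of _ 1]) (simp add: W_def)
lemma R3: "rot_equiv (W c0 c1 c2 b0 b1 b2) (W c0 c1 c2 (\<not>b0) (\<not>b1) (\<not>b2))"
  by (rule rotE[of _ 3]) (simp add: W_def rotate_def eval_nat_numeral)
lemma normT: "\<exists>e1 e2. rot_equiv (W c0 c1 c2 b0 b1 b2) (W c0 c1 c2 True e1 e2)"
  using rot_refl R3[of c0 c1 c2 False b1 b2] by (cases b0) auto

lemma RE1: "rot_equiv (E2 j i b0 b1) (E2 i j b1 (\<not>b0))"
  by (rule rotE[of _ 1]) (simp add: E2_def)
lemma RE2: "rot_equiv (E2 i j b0 b1) (E2 i j (\<not>b0) (\<not>b1))"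
  by (rule rotE[of _ 2]) (simp add: E2_def rotate_def eval_nat_numeral)
lemma RV: "rot_equiv (V1 v b) (V1 v b')"
  by (cases "b = b'") (auto simp: rot_refl intro!: rotE[of _ 1] simp: V1_def)

lemma pd_E2: "i \<noteq> j \<Longrightarrow> pd (E2 i j b0 b1) i j = (b0 = b1) \<and> pd (E2 i j b0 b1) j i = (b0 \<noteq> b1)"
  by (cases b0; cases b1) (auto simp: pd_def E2_def bf4)

lemma bf_E2: "i \<noteq> j \<Longrightarrow> bold_follows (E2 i j b0 b1) i j = (b0 = b1) \<and> bold_follows (E2 i j b0 b1) j i = (b0 \<noteq> b1)"
  by (cases b0; cases b1) (auto simp: E2_def bf4)

lemma pd_W1: "x \<noteq> y \<Longrightarrow> x \<noteq> z \<Longrightarrow> y \<noteq> z \<Longrightarrow>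
   pd (W x y z True e1 e2) x y = e1 \<and> pd (W x y z True e1 e2) x z = e2 \<and> pd (W x y z True e1 e2) y z = (e1 = e2)"
  by (cases e1; cases e2) (auto simp: pd_def W_def bf4)




definition cyc :: "nat \<times> nat \<times> nat \<Rightarrow> bool" where
 "cyc = (\<lambda>(p::nat, q::nat, r::nat). (p < q \<and> q < r) \<or> (q < r \<and> r < p) \<or> (r < p \<and> p < q))"

definition eval3 :: "nat set \<Rightarrow> nat set \<Rightarrow> nat set \<Rightarrow> rat" where
  "eval3 A B C = (of_nat (card {t \<in> A \<times> (B \<times> C). \<not> cyc t}) - of_nat (card {t \<in> A \<times> (B \<times> C). cyc t}))
      / (2 * of_nat (card A * card B * card C))"

lemma euler_gen: "euler_local w x y z = eval3 {p. p < length w \<and> fst (w!p) = x} {p. p < length w \<and> fst (w!p) = y}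
   {p. p < length w \<and> fst (w!p) = z}"
proof -
  have e: "{(p, q, r). p < length w \<and> q < length w \<and> r < length w \<and> fst (w!p) = x \<and> fst (w!q) = y \<and> fst (w!r) = z}
     = {p. p < length w \<and> fst (w!p) = x} \<times> ({p. p < length w \<and> fst (w!p) = y} \<times> {p. p < length w \<and> fst (w!p) = z})"
    by auto
  show ?thesis unfolding euler_local_def Let_def eval3_def e cyc_def by simp
qed

lemma lt6: "(p::nat) < 6 \<longleftrightarrow> p \<in> {0,1,2,3,4,5}" by auto

lemma lenW: "length (W c0 c1 c2 b0 b1 b2) = 6" by (simp add: W_def)

lemma posW: assumes "c0 \<noteq> c1" "c0 \<noteq> c2" "c1 \<noteq> c2"
  shows "{p. p < length (W c0 c1 c2 b0 b1 b2) \<and> fst (W c0 c1 c2 b0 b1 b2 ! p) = c0} = {0,3}"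
    "{p. p < length (W c0 c1 c2 b0 b1 b2) \<and> fst (W c0 c1 c2 b0 b1 b2 ! p) = c1} = {1,4}"
    "{p. p < length (W c0 c1 c2 b0 b1 b2) \<and> fst (W c0 c1 c2 b0 b1 b2 ! p) = c2} = {2,5}"
  using assms unfolding lenW by (auto simp: W_def lt6)

lemma prodf: "{t \<in> set as \<times> (set bs \<times> set cs). P t} = set (filter P (List.product as (List.product bs cs)))"
  by (simp add: set_product)

lemma ev_012: "eval3 {0,3} {1,4} {2,5} = -1/4"
proof -
  have "eval3 {0,3} {1,4} {2,5} = eval3 (set [0,3]) (set [1,4]) (set [2,5])" by simp
  also have "\<dots> = -1/4" unfolding eval3_def prodf by (simp add: cyc_def)
  finally show ?thesis .
qed
lemma ev_021: "eval3 {0,3} {2,5} {1,4} = 1/4"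
proof -
  have "eval3 {0,3} {2,5} {1,4} = eval3 (set [0,3]) (set [2,5]) (set [1,4])" by simp
  also have "\<dots> = 1/4" unfolding eval3_def prodf by (simp add: cyc_def)
  finally show ?thesis .
qed
lemma ev_102: "eval3 {1,4} {0,3} {2,5} = 1/4"
proof -
  have "eval3 {1,4} {0,3} {2,5} = eval3 (set [1,4]) (set [0,3]) (set [2,5])" by simp
  also have "\<dots> = 1/4" unfolding eval3_def prodf by (simp add: cyc_def)
  finally show ?thesis .
qed
lemma ev_120: "eval3 {1,4} {2,5} {0,3} = -1/4"
proof -
  have "eval3 {1,4} {2,5} {0,3} = eval3 (set [1,4]) (set [2,5]) (set [0,3])" by simp
  also have "\<dots> = -1/4" unfolding eval3_def prodf by (simp add: cyc_def)
  finally show ?thesis .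
qed
lemma ev_201: "eval3 {2,5} {0,3} {1,4} = -1/4"
proof -
  have "eval3 {2,5} {0,3} {1,4} = eval3 (set [2,5]) (set [0,3]) (set [1,4])" by simp
  also have "\<dots> = -1/4" unfolding eval3_def prodf by (simp add: cyc_def)
  finally show ?thesis .
qed
lemma ev_210: "eval3 {2,5} {1,4} {0,3} = 1/4"
proof -
  have "eval3 {2,5} {1,4} {0,3} = eval3 (set [2,5]) (set [1,4]) (set [0,3])" by simp
  also have "\<dots> = 1/4" unfolding eval3_def prodf by (simp add: cyc_def)
  finally show ?thesis .
qed



lemma pdW: assumes "c0 \<noteq> c1" "c0 \<noteq> c2" "c1 \<noteq> c2"
  shows "pd (W c0 c1 c2 b0 b1 b2) c0 c1 = (b0 = b1)" "pd (W c0 c1 c2 b0 b1 b2) c1 c0 = (b0 \<noteq> b1)"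
   "pd (W c0 c1 c2 b0 b1 b2) c0 c2 = (b0 = b2)" "pd (W c0 c1 c2 b0 b1 b2) c2 c0 = (b0 \<noteq> b2)"
   "pd (W c0 c1 c2 b0 b1 b2) c1 c2 = (b1 = b2)" "pd (W c0 c1 c2 b0 b1 b2) c2 c1 = (b1 \<noteq> b2)"
  using assms by (cases b0; cases b1; cases b2; auto simp: pd_def W_def bf4)+

lemma nrm1: "\<exists>e1 e2. rot_equiv (W c0 c1 c2 b0 b1 b2) (W c1 c2 c0 True e1 e2)"
  using R1 normT rot_trans by metis
lemma nrm2: "\<exists>e1 e2. rot_equiv (W c0 c1 c2 b0 b1 b2) (W c2 c0 c1 True e1 e2)"
  using R1 normT rot_trans by metis

lemma norm3: assumes "perm3 x y z c0 c1 c2"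
  shows "\<exists>e1 e2. rot_equiv (W c0 c1 c2 b0 b1 b2) (W x y z True e1 e2) \<or> rot_equiv (W c0 c1 c2 b0 b1 b2) (W x z y True e1 e2)"
  using assms unfolding perm3_def
  using normT[of c0 c1 c2 b0 b1 b2] nrm1[of c0 c1 c2 b0 b1 b2] nrm2[of c0 c1 c2 b0 b1 b2]
  by auto

definition canon :: "'v \<Rightarrow> 'v \<Rightarrow> 'v \<Rightarrow> bool \<Rightarrow> bool \<Rightarrow> bool \<Rightarrow> ('v \<times> bool) list" where
  "canon x y z p q r = (if r = (p = q) then W x y z True p q else W x z y True q p)"

lemma canon_pd: assumes "x \<noteq> y" "x \<noteq> z" "y \<noteq> z"
  shows "pd (canon x y z p q r) x y = p" "pd (canon x y z p q r) y x = (\<not> p)"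
   "pd (canon x y z p q r) x z = q" "pd (canon x y z p q r) z x = (\<not> q)"
   "pd (canon x y z p q r) y z = r" "pd (canon x y z p q r) z y = (\<not> r)"
  using assms pdW[of x y z True p q] pdW[of x z y True q p] unfolding canon_def by auto

lemma canon_fsn: assumes "x \<noteq> y" "x \<noteq> z" "y \<noteq> z"
  shows "framed_small_necklace {x,y,z} (canon x y z p q r)"
  using assms fsn_W[of x y z] fsn_W[of x z y] unfolding canon_def by (auto simp: insert_commute)

lemma canon_ok: assumes "framed_small_necklace {x,y,z} w" "x \<noteq> y" "x \<noteq> z" "y \<noteq> z"
  shows "rot_equiv w (canon x y z (pd w x y) (pd w x z) (pd w y z))"
proof -
  obtain c0 c1 c2 b0 b1 b2 where w: "w = W c0 c1 c2 b0 b1 b2" and pm: "perm3 x y z c0 c1 c2"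
    using form3[OF assms] by blast
  obtain e1 e2 where "rot_equiv w (W x y z True e1 e2) \<or> rot_equiv w (W x z y True e1 e2)"
    using norm3[OF pm] w by blast
  thus ?thesis
  proof
    assume r: "rot_equiv w (W x y z True e1 e2)"
    have "pd w x y = e1" "pd w x z = e2" "pd w y z = (e1 = e2)"
      using pd_rot[OF r] pdW[of x y z True e1 e2] assms(2-4) by auto
    thus ?thesis using r unfolding canon_def by simp
  next
    assume r: "rot_equiv w (W x z y True e1 e2)"
    have "pd w x y = e2" "pd w x z = e1" "pd w y z = (e1 \<noteq> e2)"
      using pd_rot[OF r] pdW[of x z y True e1 e2] assms(2-4) by auto
    thus ?thesis using r unfolding canon_def by auto
  qed
qed

definition sg :: "bool \<Rightarrow> int" where "sg b = (if b then 1 else -1)"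

lemma E5: assumes "x \<noteq> y" "x \<noteq> z" "y \<noteq> z" "perm3 x y z c0 c1 c2"
  shows "Fmap (sg (pd (W c0 c1 c2 b0 b1 b2) y z) - sg (pd (W c0 c1 c2 b0 b1 b2) x z) + sg (pd (W c0 c1 c2 b0 b1 b2) x y))
     = euler_local (W c0 c1 c2 b0 b1 b2) x y z"
  using assms unfolding perm3_def
  by (cases b0; cases b1; cases b2; auto simp: pdW euler_gen posW ev_012[unfolded One_nat_def] ev_021[unfolded One_nat_def] ev_102[unfolded One_nat_def] ev_120[unfolded One_nat_def] ev_201[unfolded One_nat_def] ev_210[unfolded One_nat_def] Fmap_def sg_def)




definition good :: "('v \<times> 'v \<times> 'v) set \<Rightarrow> bool" where
  "good T \<longleftrightarrow> (\<forall>x y z. (x,y,z) \<in> T \<longrightarrow> x \<noteq> y \<and> y \<noteq> z \<and> x \<noteq> z \<and> (y,z,x) \<in> T)"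

lemma good_of: "closed_oriented_surface V T \<Longrightarrow> good T"
  unfolding closed_oriented_surface_def good_def by blast

lemma goodD: "good T \<Longrightarrow> (x,y,z) \<in> T \<Longrightarrow> x \<noteq> y \<and> y \<noteq> z \<and> x \<noteq> z \<and> (y,z,x) \<in> T \<and> (z,x,y) \<in> T"
  unfolding good_def by blast

lemma sub3: "\<tau> \<subseteq> {a,b,c} \<Longrightarrow> \<tau> \<noteq> {} \<Longrightarrow>
   \<tau> = {a} \<or> \<tau> = {b} \<or> \<tau> = {c} \<or> \<tau> = {a,b} \<or> \<tau> = {a,c} \<or> \<tau> = {b,c} \<or> \<tau> = {a,b,c}"
  by (cases "a \<in> \<tau>"; cases "b \<in> \<tau>"; cases "c \<in> \<tau>"; blast)

lemma sub2: "\<tau> \<subseteq> {a,b} \<Longrightarrow> \<tau> \<noteq> {} \<Longrightarrow> \<tau> = {a} \<or> \<tau> = {b} \<or> \<tau> = {a,b}"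
  by (cases "a \<in> \<tau>"; cases "b \<in> \<tau>"; blast)

lemma simpE: assumes "\<sigma> \<in> simplices T"
  obtains x y z where "(x,y,z) \<in> T" "\<sigma> = {x} \<or> \<sigma> = {x,y} \<or> \<sigma> = {x,y,z}"
  using assms unfolding simplices_def by blast

lemma simpI: "(x,y,z) \<in> T \<Longrightarrow> {x} \<in> simplices T \<and> {x,y} \<in> simplices T \<and> {x,y,z} \<in> simplices T"
  unfolding simplices_def by blast

lemma sub_simp: assumes "good T" "\<sigma> \<in> simplices T" "\<tau> \<subseteq> \<sigma>" "\<tau> \<noteq> {}" shows "\<tau> \<in> simplices T"
proof -
  obtain x y z where t: "(x,y,z) \<in> T" and s: "\<sigma> = {x} \<or> \<sigma> = {x,y} \<or> \<sigma> = {x,y,z}"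
    using assms(2) by (rule simpE)
  have r: "(y,z,x) \<in> T" "(z,x,y) \<in> T" using goodD[OF assms(1) t] by auto
  have "\<tau> \<subseteq> {x,y,z}" using s assms(3) by auto
  hence "\<tau> = {x} \<or> \<tau> = {y} \<or> \<tau> = {z} \<or> \<tau> = {x,y} \<or> \<tau> = {x,z} \<or> \<tau> = {y,z} \<or> \<tau> = {x,y,z}"
    using sub3 assms(4) by blast
  moreover have "{x,z} \<in> simplices T" using simpI[OF r(2)] by (metis insert_commute)
  ultimately show ?thesis using simpI[OF t] simpI[OF r(1)] simpI[OF r(2)] by (elim disjE) simp_all
qed

lemma edge_simp: assumes "is_edge T i j" shows "{i,j} \<in> simplices T"
proof -
  obtain z where "(i,j,z) \<in> T \<or> (j,i,z) \<in> T" using assms unfolding is_edge_def by blast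
  thus ?thesis
  proof (elim disjE)
    assume "(j,i,z) \<in> T" from simpI[OF this] have "{j,i} \<in> simplices T" by simp
    thus ?thesis by (simp add: insert_commute)
  next
    assume "(i,j,z) \<in> T" from simpI[OF this] show ?thesis by simp
  qed
qed

lemma is_edge_sym: "is_edge T i j = is_edge T j i" unfolding is_edge_def by auto

lemma simp_edge: assumes "good T" "\<sigma> \<in> simplices T" "i \<in> \<sigma>" "j \<in> \<sigma>" "i \<noteq> j" shows "is_edge T i j"
proof -
  obtain x y z where t: "(x,y,z) \<in> T" and s: "\<sigma> = {x} \<or> \<sigma> = {x,y} \<or> \<sigma> = {x,y,z}"
    using assms(2) by (rule simpE)
  have r: "(y,z,x) \<in> T" "(z,x,y) \<in> T" using goodD[OF assms(1) t] by auto
  have "i \<in> {x,y,z}" "j \<in> {x,y,z}" using s assms(3,4) by auto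
  thus ?thesis using t r assms(5) unfolding is_edge_def by auto
qed

lemma fsn_colors: "framed_small_necklace \<sigma> w \<Longrightarrow> filter (\<lambda>b. fst b \<in> \<sigma>) w = w"
  unfolding framed_small_necklace_def by (auto intro: filter_True)

lemma pd_self: "framed_small_necklace {i,j} w \<Longrightarrow> pd w i j = bold_follows w i j"
  unfolding pd_def using fsn_colors[of "{i,j}" w] by simp

lemma pd_filter: assumes "i \<in> \<tau>" "j \<in> \<tau>" shows "pd (filter (\<lambda>b. fst b \<in> \<tau>) w) i j = pd w i j"
proof -
  have h: "(\<lambda>b. fst b \<in> \<tau> \<and> fst b \<in> {i,j}) = (\<lambda>b. fst b \<in> {i,j})" using assms by auto
  show ?thesis unfolding pd_def filter_filter h ..
qed

lemma bf_anti: assumes "framed_small_necklace {i,j} w" "i \<noteq> j" shows "bold_follows w j i = (\<not> bold_follows w i j)"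
proof -
  obtain b0 b1 where "w = E2 i j b0 b1 \<or> w = E2 j i b0 b1" using form2[OF assms] by blast
  thus ?thesis
  proof (elim disjE)
    assume "w = E2 i j b0 b1" thus ?thesis using bf_E2[OF assms(2), of b0 b1] by simp
  next
    assume "w = E2 j i b0 b1" thus ?thesis using bf_E2[of j i b0 b1] assms(2) by simp
  qed
qed

lemma edge_norm: "rot_equiv (E2 x y b0 b1) (E2 x y True (b0 = b1))"
  using rot_refl RE2[of x y False b1] by (cases b0) auto

lemma edge_ok: assumes "framed_small_necklace {x,y} w" "x \<noteq> y"
  shows "rot_equiv w (E2 x y True (pd w x y))"
proof -
  obtain b0 b1 where "w = E2 x y b0 b1 \<or> w = E2 y x b0 b1" using form2[OF assms] by blast
  thus ?thesis
  proof
    assume w: "w = E2 x y b0 b1"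
    thus ?thesis using edge_norm pd_E2[OF assms(2)] by simp
  next
    assume w: "w = E2 y x b0 b1"
    have r: "rot_equiv w (E2 x y b1 (\<not> b0))" using w RE1 by simp
    have "pd w x y = pd (E2 x y b1 (\<not> b0)) x y" using pd_rot[OF r] by simp
    also have "\<dots> = (b1 = (\<not> b0))" using pd_E2[OF assms(2)] by simp
    finally have "pd w x y = (b1 = (\<not> b0))" .
    thus ?thesis using rot_trans[OF r edge_norm] by simp
  qed
qed

lemma vert_ok: "framed_small_necklace {v} w \<Longrightarrow> rot_equiv w (V1 v True)"
  using form1 RV rot_refl by fastforce

lemma uniq: assumes "good T" "\<sigma> \<in> simplices T" "framed_small_necklace \<sigma> w" "framed_small_necklace \<sigma> w'"
   "\<forall>i\<in>\<sigma>. \<forall>j\<in>\<sigma>. i \<noteq> j \<longrightarrow> pd w i j = pd w' i j"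
  shows "rot_equiv w w'"
proof -
  obtain x y z where t: "(x,y,z) \<in> T" and s: "\<sigma> = {x} \<or> \<sigma> = {x,y} \<or> \<sigma> = {x,y,z}"
    using assms(2) by (rule simpE)
  have d: "x \<noteq> y" "y \<noteq> z" "x \<noteq> z" using goodD[OF assms(1) t] by auto
  from s show ?thesis
  proof (elim disjE)
    assume "\<sigma> = {x}"
    hence a: "rot_equiv w (V1 x True)" and b: "rot_equiv w' (V1 x True)" using vert_ok assms(3,4) by auto
    from b have "rot_equiv (V1 x True) w'" by (rule rot_sym)
    with a have "rot_equiv w (V1 x True)" "rot_equiv (V1 x True) w'" by auto
    thus ?thesis by (rule rot_trans)
  next
    assume e: "\<sigma> = {x,y}"
    have "pd w x y = pd w' x y" using assms(5) e d by auto
    moreover have "rot_equiv w (E2 x y True (pd w x y))" "rot_equiv w' (E2 x y True (pd w' x y))"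
      using edge_ok[of x y w] edge_ok[of x y w'] assms(3,4) e d by auto
    ultimately have "rot_equiv w (E2 x y True (pd w' x y))" "rot_equiv (E2 x y True (pd w' x y)) w'"
      using rot_sym by auto
    thus ?thesis by (rule rot_trans)
  next
    assume e: "\<sigma> = {x,y,z}"
    have "pd w x y = pd w' x y" "pd w x z = pd w' x z" "pd w y z = pd w' y z" using assms(5) e d by auto
    moreover have "rot_equiv w (canon x y z (pd w x y) (pd w x z) (pd w y z))"
       "rot_equiv w' (canon x y z (pd w' x y) (pd w' x z) (pd w' y z))"
      using canon_ok[of x y z w] canon_ok[of x y z w'] assms(3,4) e d by auto
    ultimately have "rot_equiv w (canon x y z (pd w' x y) (pd w' x z) (pd w' y z))"
       "rot_equiv (canon x y z (pd w' x y) (pd w' x z) (pd w' y z)) w'"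
      using rot_sym by auto
    thus ?thesis by (rule rot_trans)
  qed
qed

lemma filtW: assumes "c0 \<noteq> c1" "c0 \<noteq> c2" "c1 \<noteq> c2"
  shows "filter (\<lambda>b. fst b \<in> {c0}) (W c0 c1 c2 b0 b1 b2) = V1 c0 b0"
   "filter (\<lambda>b. fst b \<in> {c1}) (W c0 c1 c2 b0 b1 b2) = V1 c1 b1"
   "filter (\<lambda>b. fst b \<in> {c2}) (W c0 c1 c2 b0 b1 b2) = V1 c2 b2"
   "filter (\<lambda>b. fst b \<in> {c0,c1}) (W c0 c1 c2 b0 b1 b2) = E2 c0 c1 b0 b1"
   "filter (\<lambda>b. fst b \<in> {c0,c2}) (W c0 c1 c2 b0 b1 b2) = E2 c0 c2 b0 b2"
   "filter (\<lambda>b. fst b \<in> {c1,c2}) (W c0 c1 c2 b0 b1 b2) = E2 c1 c2 b1 b2"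
  using assms by (auto simp: W_def V1_def E2_def)

lemma filtE: assumes "i \<noteq> j"
  shows "filter (\<lambda>b. fst b \<in> {i}) (E2 i j b0 b1) = V1 i b0"
   "filter (\<lambda>b. fst b \<in> {j}) (E2 i j b0 b1) = V1 j b1"
  using assms by (auto simp: V1_def E2_def)

lemma fsn_filter: assumes "good T" "\<sigma> \<in> simplices T" "framed_small_necklace \<sigma> w" "\<tau> \<subseteq> \<sigma>" "\<tau> \<noteq> {}"
  shows "framed_small_necklace \<tau> (filter (\<lambda>b. fst b \<in> \<tau>) w)"
proof (cases "\<tau> = \<sigma>")
  case True thus ?thesis using fsn_colors assms(3) by metis
next
  case ne: False
  obtain x y z where t: "(x,y,z) \<in> T" and s: "\<sigma> = {x} \<or> \<sigma> = {x,y} \<or> \<sigma> = {x,y,z}"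
    using assms(2) by (rule simpE)
  have d: "x \<noteq> y" "y \<noteq> z" "x \<noteq> z" using goodD[OF assms(1) t] by auto
  from s show ?thesis
  proof (elim disjE)
    assume "\<sigma> = {x}" hence "\<tau> = \<sigma>" using assms(4,5) by blast
    thus ?thesis using ne by blast
  next
    assume e: "\<sigma> = {x,y}"
    then obtain b0 b1 where "w = E2 x y b0 b1 \<or> w = E2 y x b0 b1" using form2[of x y w] assms(3) d by auto
    moreover have "\<tau> = {x} \<or> \<tau> = {y}" using sub2[of \<tau> x y] e ne assms(4,5) by blast
    ultimately show ?thesis
    proof (elim disjE)
    qed (simp_all add: filtE[OF d(1)] filtE[OF d(1)[symmetric]] filtE[OF d(1), simplified] filtE[OF d(1)[symmetric], simplified] fsn_V1)
  next
    assume e: "\<sigma> = {x,y,z}"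
    then obtain c0 c1 c2 b0 b1 b2 where w: "w = W c0 c1 c2 b0 b1 b2" and pm: "perm3 x y z c0 c1 c2"
      using form3[of x y z w] assms(3) d by auto
    have dc: "c0 \<noteq> c1" "c0 \<noteq> c2" "c1 \<noteq> c2" and ss: "{c0,c1,c2} = \<sigma>" using pm d e unfolding perm3_def by auto
    have "\<tau> = {c0} \<or> \<tau> = {c1} \<or> \<tau> = {c2} \<or> \<tau> = {c0,c1} \<or> \<tau> = {c0,c2} \<or> \<tau> = {c1,c2}"
      using sub3[of \<tau> c0 c1 c2] ss ne assms(4,5) by blast
    thus ?thesis
    proof (elim disjE)
    qed (simp_all add: filtW[OF dc] filtW[OF dc, simplified] w fsn_V1 fsn_E2 dc)
  qed
qed




lemma cf_fsn: "consistent_framed T N \<Longrightarrow> \<sigma> \<in> simplices T \<Longrightarrow> framed_small_necklace \<sigma> (N \<sigma>)"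
  unfolding consistent_framed_def by blast

lemma cf_pd: assumes "consistent_framed T N" "\<sigma> \<in> simplices T" "i \<in> \<sigma>" "j \<in> \<sigma>"
  shows "pd (N \<sigma>) i j = bold_follows (N {i,j}) i j"
proof -
  have "{i,j} \<subseteq> \<sigma>" "{i,j} \<noteq> {}" using assms(3,4) by auto
  hence r: "rot_equiv (filter (\<lambda>b. fst b \<in> {i,j}) (N \<sigma>)) (N {i,j})"
    using assms(1,2) unfolding consistent_framed_def by blast
  show ?thesis unfolding pd_def using bf_rot[OF r] by simp
qed

lemma orient_edge: "is_edge T i j \<Longrightarrow> orient_of T N i j = sg (bold_follows (N {i,j}) i j)"
  unfolding orient_of_def sg_def by simp

lemma orient_nonedge: "\<not> is_edge T i j \<Longrightarrow> orient_of T N i j = 0"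
  unfolding orient_of_def by simp

lemma sg_inj: "sg p = sg q \<longleftrightarrow> p = q" unfolding sg_def by auto

lemma OrE: assumes "a \<in> Or T"
  shows "is_edge T i j \<Longrightarrow> (a i j = 1 \<or> a i j = -1) \<and> a j i = - a i j"
    "\<not> is_edge T i j \<Longrightarrow> a i j = 0"
  using assms unfolding Or_def by auto

lemma P1: fixes T :: "('v \<times> 'v \<times> 'v) set" assumes g: "good T"
  shows "\<forall>N. consistent_framed T N \<longrightarrow> orient_of T N \<in> Or T"
proof (intro allI impI)
  fix N assume cf: "consistent_framed T N"
  show "orient_of T N \<in> Or T" unfolding Or_def
  proof (intro CollectI allI conjI impI)
    fix i j assume e: "is_edge T i j"
    show "orient_of T N i j \<in> {1, -1}" using e unfolding orient_of_def by simp
    have ij: "i \<noteq> j" using e unfolding is_edge_def by blast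
    have e': "is_edge T j i" using e is_edge_sym by metis
    have f: "framed_small_necklace {i,j} (N {i,j})" using cf_fsn[OF cf edge_simp[OF e]] .
    have "bold_follows (N {i,j}) j i = (\<not> bold_follows (N {i,j}) i j)" using bf_anti[OF f ij] .
    thus "orient_of T N j i = - orient_of T N i j" using e e' unfolding orient_of_def
      by (simp add: insert_commute)
  next
    fix i j assume "\<not> is_edge T i j" thus "orient_of T N i j = 0" by (rule orient_nonedge)
  qed
qed

lemma P2: fixes T :: "('v \<times> 'v \<times> 'v) set" assumes g: "good T"
  shows "\<forall>N N'. consistent_framed T N \<longrightarrow> consistent_framed T N' \<longrightarrow>
              (\<forall>\<sigma> \<in> simplices T. rot_equiv (N \<sigma>) (N' \<sigma>)) \<longrightarrow> orient_of T N = orient_of T N'"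
proof (intro allI impI ext)
  fix N N' :: "'v set \<Rightarrow> ('v \<times> bool) list" and i j assume r: "\<forall>\<sigma> \<in> simplices T. rot_equiv (N \<sigma>) (N' \<sigma>)"
  show "orient_of T N i j = orient_of T N' i j"
  proof (cases "is_edge T i j")
    case True
    have "rot_equiv (N {i,j}) (N' {i,j})" using r edge_simp[OF True] by blast
    hence "bold_follows (N' {i,j}) i j = bold_follows (N {i,j}) i j" by (rule bf_rot)
    thus ?thesis unfolding orient_of_def by simp
  next
    case False thus ?thesis unfolding orient_of_def by simp
  qed
qed

lemma P3: fixes T :: "('v \<times> 'v \<times> 'v) set" assumes g: "good T"
  shows "\<forall>N N'. consistent_framed T N \<longrightarrow> consistent_framed T N' \<longrightarrow>
              orient_of T N = orient_of T N' \<longrightarrow> (\<forall>\<sigma> \<in> simplices T. rot_equiv (N \<sigma>) (N' \<sigma>))"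
proof (intro allI impI ballI)
  fix N N' \<sigma> assume cf: "consistent_framed T N" and cf': "consistent_framed T N'"
    and eq: "orient_of T N = orient_of T N'" and s: "\<sigma> \<in> simplices T"
  show "rot_equiv (N \<sigma>) (N' \<sigma>)"
  proof (rule uniq[OF g s cf_fsn[OF cf s] cf_fsn[OF cf' s]], intro ballI impI)
    fix i j assume i: "i \<in> \<sigma>" and j: "j \<in> \<sigma>" and ij: "i \<noteq> j"
    have e: "is_edge T i j" using simp_edge[OF g s i j ij] .
    have "sg (bold_follows (N {i,j}) i j) = sg (bold_follows (N' {i,j}) i j)"
      using eq orient_edge[OF e, of N] orient_edge[OF e, of N'] by metis
    hence "bold_follows (N {i,j}) i j = bold_follows (N' {i,j}) i j" by (simp add: sg_inj)
    thus "pd (N \<sigma>) i j = pd (N' \<sigma>) i j" using cf_pd[OF cf s i j] cf_pd[OF cf' s i j] by simp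
  qed
qed

lemma P4: fixes T :: "('v \<times> 'v \<times> 'v) set" assumes g: "good T"
  shows "\<forall>a \<in> Or T. \<exists>N. consistent_framed T N \<and> orient_of T N = a"
proof
  fix a assume aO: "a \<in> Or T"
  define S where "S \<sigma> w \<longleftrightarrow> framed_small_necklace \<sigma> w \<and> (\<forall>i\<in>\<sigma>. \<forall>j\<in>\<sigma>. i \<noteq> j \<longrightarrow> pd w i j = (a i j = 1))"
    for \<sigma> w
  have anti: "(a j i = 1) = (\<not> a i j = 1)" if "is_edge T i j" for i j
    using OrE(1)[OF aO that] by auto
  have ex: "\<exists>w. S \<sigma> w" if s: "\<sigma> \<in> simplices T" for \<sigma>
  proof -
    obtain x y z where t: "(x,y,z) \<in> T" and sh: "\<sigma> = {x} \<or> \<sigma> = {x,y} \<or> \<sigma> = {x,y,z}"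
      using s by (rule simpE)
    have d: "x \<noteq> y" "y \<noteq> z" "x \<noteq> z" using goodD[OF g t] by auto
    have s3: "{x,y,z} \<in> simplices T" using simpI[OF t] by simp
    have exy: "is_edge T x y" "is_edge T x z" "is_edge T y z"
      using simp_edge[OF g s3] d by auto
    from sh show ?thesis
    proof (elim disjE)
      assume e: "\<sigma> = {x}"
      show ?thesis unfolding S_def e by (intro exI[of _ "V1 x True"]) (simp add: fsn_V1)
    next
      assume e: "\<sigma> = {x,y}"
      have "S \<sigma> (E2 x y True (a x y = 1))" unfolding S_def e
        using fsn_E2[OF d(1)] pd_E2[OF d(1), of True "a x y = 1"] anti[OF exy(1)] by auto
      thus ?thesis by blast
    next
      assume e: "\<sigma> = {x,y,z}"
      have "S \<sigma> (canon x y z (a x y = 1) (a x z = 1) (a y z = 1))" unfolding S_def e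
        using canon_fsn[OF d(1) d(3) d(2)] canon_pd[OF d(1) d(3) d(2), of "a x y = 1" "a x z = 1" "a y z = 1"]
          anti[OF exy(1)] anti[OF exy(2)] anti[OF exy(3)] by auto
      thus ?thesis by blast
    qed
  qed
  define N where "N \<sigma> = (SOME w. S \<sigma> w)" for \<sigma>
  have NS: "S \<sigma> (N \<sigma>)" if "\<sigma> \<in> simplices T" for \<sigma>
    unfolding N_def using ex[OF that] by (rule someI_ex)
  have cf: "consistent_framed T N" unfolding consistent_framed_def
  proof (intro conjI ballI allI impI)
    fix \<sigma> assume "\<sigma> \<in> simplices T" thus "framed_small_necklace \<sigma> (N \<sigma>)" using NS S_def by blast
  next
    fix \<sigma> \<tau> assume s: "\<sigma> \<in> simplices T" and st: "\<tau> \<subseteq> \<sigma> \<and> \<tau> \<noteq> {}"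
    have t: "\<tau> \<in> simplices T" using sub_simp[OF g s] st by blast
    have fs: "framed_small_necklace \<sigma> (N \<sigma>)" using NS[OF s] S_def by blast
    show "rot_equiv (filter (\<lambda>b. fst b \<in> \<tau>) (N \<sigma>)) (N \<tau>)"
    proof (rule uniq[OF g t])
      show "framed_small_necklace \<tau> (filter (\<lambda>b. fst b \<in> \<tau>) (N \<sigma>))"
        using fsn_filter[OF g s fs] st by blast
      show "framed_small_necklace \<tau> (N \<tau>)" using NS[OF t] S_def by blast
      show "\<forall>i\<in>\<tau>. \<forall>j\<in>\<tau>. i \<noteq> j \<longrightarrow> pd (filter (\<lambda>b. fst b \<in> \<tau>) (N \<sigma>)) i j = pd (N \<tau>) i j"
      proof (intro ballI impI)
        fix i j assume i: "i \<in> \<tau>" and j: "j \<in> \<tau>" and ij: "i \<noteq> j"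
        have "pd (filter (\<lambda>b. fst b \<in> \<tau>) (N \<sigma>)) i j = pd (N \<sigma>) i j" using pd_filter[OF i j] .
        also have "\<dots> = (a i j = 1)" using NS[OF s] i j ij st unfolding S_def by blast
        also have "\<dots> = pd (N \<tau>) i j" using NS[OF t] i j ij unfolding S_def by blast
        finally show "pd (filter (\<lambda>b. fst b \<in> \<tau>) (N \<sigma>)) i j = pd (N \<tau>) i j" .
      qed
    qed
  qed
  have "orient_of T N = a"
  proof (intro ext)
    fix i j show "orient_of T N i j = a i j"
    proof (cases "is_edge T i j")
      case True
      have ij: "i \<noteq> j" using True unfolding is_edge_def by blast
      have s: "{i,j} \<in> simplices T" using edge_simp[OF True] .
      have fs: "framed_small_necklace {i,j} (N {i,j})" using NS[OF s] S_def by blast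
      have "pd (N {i,j}) i j = (a i j = 1)" using NS[OF s] ij unfolding S_def by blast
      hence "bold_follows (N {i,j}) i j = (a i j = 1)" using pd_self[OF fs] by simp
      thus ?thesis using orient_edge[OF True, of N] OrE(1)[OF aO True] unfolding sg_def by auto
    next
      case False thus ?thesis using orient_nonedge[OF False] OrE(2)[OF aO False] by simp
    qed
  qed
  thus "\<exists>N. consistent_framed T N \<and> orient_of T N = a" using cf by blast
qed

lemma P5: fixes T :: "('v \<times> 'v \<times> 'v) set" assumes g: "good T"
  shows "\<forall>a \<in> Or T. \<forall>N. consistent_framed T N \<and> orient_of T N = a \<longrightarrow>
            (\<exists>c :: 'v \<Rightarrow> 'v \<Rightarrow> rat. (\<forall>i j. c j i = - c i j) \<and>
               (\<forall>(x, y, z) \<in> T.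
                  Fmap (a y z - a x z + a x y) - euler_local (N {x, y, z}) x y z
                    = c y z - c x z + c x y))"
proof (intro ballI allI impI)
  fix a N assume aO: "a \<in> Or T" and h: "consistent_framed T N \<and> orient_of T N = a"
  have cf: "consistent_framed T N" and oa: "orient_of T N = a" using h by auto
  have "\<forall>(x, y, z) \<in> T. Fmap (a y z - a x z + a x y) - euler_local (N {x, y, z}) x y z = 0"
  proof (intro ballI, clarify)
    fix x y z assume t: "(x,y,z) \<in> T"
    have d: "x \<noteq> y" "y \<noteq> z" "x \<noteq> z" using goodD[OF g t] by auto
    have s3: "{x,y,z} \<in> simplices T" using simpI[OF t] by simp
    have exy: "is_edge T x y" "is_edge T x z" "is_edge T y z"
      using simp_edge[OF g s3] d by auto
    have fs: "framed_small_necklace {x,y,z} (N {x,y,z})" using cf_fsn[OF cf s3] .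
    obtain c0 c1 c2 b0 b1 b2 where w: "N {x,y,z} = W c0 c1 c2 b0 b1 b2" and pm: "perm3 x y z c0 c1 c2"
      using form3[OF fs d(1) d(3) d(2)] by blast
    have axy: "a x y = sg (pd (N {x,y,z}) x y)"
      using orient_edge[OF exy(1), of N] cf_pd[OF cf s3, of x y] oa by simp
    have axz: "a x z = sg (pd (N {x,y,z}) x z)"
      using orient_edge[OF exy(2), of N] cf_pd[OF cf s3, of x z] oa by simp
    have ayz: "a y z = sg (pd (N {x,y,z}) y z)"
      using orient_edge[OF exy(3), of N] cf_pd[OF cf s3, of y z] oa by simp
    show "Fmap (a y z - a x z + a x y) - euler_local (N {x, y, z}) x y z = 0"
      unfolding axy axz ayz w using E5[OF d(1) d(3) d(2) pm, of b0 b1 b2] by simp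
  qed
  thus "\<exists>c :: 'v \<Rightarrow> 'v \<Rightarrow> rat. (\<forall>i j. c j i = - c i j) \<and>
             (\<forall>(x, y, z) \<in> T.
                Fmap (a y z - a x z + a x y) - euler_local (N {x, y, z}) x y z
                  = c y z - c x z + c x y)"
    by (intro exI[of _ "\<lambda>_ _. 0"]) auto
qed

theorem mainTheorem9:
  fixes V :: "'v set" and T :: "('v \<times> 'v \<times> 'v) set"
  assumes "closed_oriented_surface V T"
  shows "(\<forall>N. consistent_framed T N \<longrightarrow> orient_of T N \<in> Or T)
       \<and> (\<forall>N N'. consistent_framed T N \<longrightarrow> consistent_framed T N' \<longrightarrow>
              (\<forall>\<sigma> \<in> simplices T. rot_equiv (N \<sigma>) (N' \<sigma>)) \<longrightarrow> orient_of T N = orient_of T N')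
       \<and> (\<forall>N N'. consistent_framed T N \<longrightarrow> consistent_framed T N' \<longrightarrow>
              orient_of T N = orient_of T N' \<longrightarrow> (\<forall>\<sigma> \<in> simplices T. rot_equiv (N \<sigma>) (N' \<sigma>)))
       \<and> (\<forall>a \<in> Or T. \<exists>N. consistent_framed T N \<and> orient_of T N = a)
       \<and> (\<forall>a \<in> Or T. \<forall>N. consistent_framed T N \<and> orient_of T N = a \<longrightarrow>
            (\<exists>c :: 'v \<Rightarrow> 'v \<Rightarrow> rat. (\<forall>i j. c j i = - c i j) \<and>
               (\<forall>(x, y, z) \<in> T.
                  Fmap (a y z - a x z + a x y) - euler_local (N {x, y, z}) x y z
                    = c y z - c x z + c x y)))"
proof -
  have g: "good T" using assms by (rule good_of)
  show ?thesis using P1[OF g] P2[OF g] P3[OF g] P4[OF g] P5[OF g] by blast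
qed


end
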